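(* Let $0<q<1$, let $z\in\mathbb{C}$ with $\Re z>0$, and put $\delta=\frac{2\pi i}{\log q}$. The $q$-Hurwitz zeta-function $$\zeta(s,z:q)=\sum_{k=0}^{\infty}\frac{q^{s(k+1)}}{[k+z]_q^{\,s}},\qquad [x]_q=\frac{1-q^x}{1-q},$$ which is holomorphic for $\Re s>0$, has a meromorphic continuation to the whole $s$-plane. Its poles are exactly the points $s=-r+\delta l$ with $r\in\mathbb{Z}_{\ge 0}$, $l\in\mathbb{Z}$, and all of them are simple. The Laurent expansion at $s=0$ is $$\zeta(s,z:q)=\frac{\alpha_{-1}}{s}+\alpha_0+s\Big\{\alpha_1-\log\prod_{k=1}^{\infty}(1-q^{z-1+k})\Big\}+O(s^2),$$ where $$\alpha_{-1}=-\frac{1}{\log q},\qquad \alpha_0=\frac12-\frac{\log(q-q^2)}{\log q},\qquad \alpha_1=-\frac{1}{12}\log q+\frac12\log(q-q^2)-\frac12\frac{(\log(q-q^2))^2}{\log q}.$$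
   Context: Complex powers are defined with the principal branch of the logarithm: $q^{s(k+1)}=e^{s(k+1)\log q}$ and $[k+z]_q^{\,s}=e^{s\log[k+z]_q}$. The defining series converges absolutely for $\Re s>0$. *)

theory Defs
  imports "HOL-Complex_Analysis.Complex_Analysis" "HOL-Library.Landau_Symbols"
begin

definition qnum :: "real \<Rightarrow> complex \<Rightarrow> complex" where
  "qnum q x = (1 - exp (x * of_real (ln q))) / (1 - of_real q)"

definition qhz_term :: "real \<Rightarrow> complex \<Rightarrow> complex \<Rightarrow> nat \<Rightarrow> complex" where
  "qhz_term q z s k = exp (s * of_nat (k + 1) * of_real (ln q)) / exp (s * Ln (qnum q (of_nat k + z)))"

text \<open>The q-Hurwitz zeta function (series definition, meaningful for Re s > 0).\<close>
definition qHurwitz_zeta :: "real \<Rightarrow> complex \<Rightarrow> complex \<Rightarrow> complex" where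
  "qHurwitz_zeta q z s = (\<Sum>k. qhz_term q z s k)"

end

theory Submission
  imports Defs
begin
lemma pochhammer_nonneg0: "0 \<le> (x::real) \<Longrightarrow> 0 \<le> pochhammer x n"
  by (induction n) (auto simp: pochhammer_Suc)

lemma pochhammer_mono0: "0 \<le> (x::real) \<Longrightarrow> x \<le> y \<Longrightarrow> pochhammer x n \<le> pochhammer y n"
proof (induction n)
  case (Suc n)
  then show ?case
    by (auto simp: pochhammer_Suc intro!: mult_mono pochhammer_nonneg0)
qed simp

lemma norm_pochhammer_le:
  fixes s :: complex
  shows "norm (pochhammer s m) \<le> pochhammer (norm s) m"
proof (induction m)
  case (Suc m)
  have "norm (pochhammer s (Suc m)) = norm (pochhammer s m) * norm (s + of_nat m)"
    by (simp add: pochhammer_Suc norm_mult)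
  also have "\<dots> \<le> pochhammer (norm s) m * (norm s + of_nat m)"
    using Suc by (intro mult_mono) (auto intro: order_trans[OF norm_triangle_ineq] simp: pochhammer_nonneg0)
  finally show ?case by (simp add: pochhammer_Suc)
qed simp

lemma summable_poch_geom:
  fixes R x :: real
  assumes "0 \<le> x" "x < 1"
  shows "summable (\<lambda>n. pochhammer R n / fact n * x ^ n)"
proof -
  have "\<bar>-x\<bar> < 1" using assms by simp
  from gen_binomial_real[OF this, of "-R"]
  have "summable (\<lambda>n. ((-R) gchoose n) * (-x) ^ n)" by (rule sums_summable)
  moreover have "((-R) gchoose n) * (-x) ^ n = pochhammer R n / fact n * x ^ n" for n
  proof -
    have "((-R) gchoose n) * (-x) ^ n = ((-1)^n * (-1)^n) * (pochhammer R n / fact n * x ^ n)"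
      by (simp add: gbinomial_pochhammer power_minus[of x])
    also have "(-1::real)^n * (-1)^n = 1" by (simp flip: power_add)
    finally show ?thesis by simp
  qed
  ultimately show ?thesis by simp
qed

lemma infsum_suminf_c:
  fixes g :: "nat \<Rightarrow> complex"
  assumes "summable (\<lambda>n. norm (g n))"
  shows "infsum g UNIV = suminf g"
  by (rule infsumI[OF norm_summable_imp_has_sum[OF assms summable_sums[OF summable_norm_cancel[OF assms]]]])

lemma swap_aux1:
  fixes a b :: "nat \<Rightarrow> real"
  assumes sa: "summable a" and sb: "summable b"
    and a0: "\<And>m. 0 \<le> a m" and b0: "\<And>k. 0 \<le> b k"
  shows "(\<lambda>(m,k). a m * b k) summable_on Sigma UNIV (\<lambda>_. UNIV)"
proof -
  have hs: "((\<lambda>k. a m * b k) has_sum a m * suminf b) UNIV" for m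
    by (rule sums_nonneg_imp_has_sum) (auto intro!: sums_mult summable_sums sb a0 b0 mult_nonneg_nonneg)
  have t2: "(\<lambda>m. a m * suminf b) summable_on UNIV"
      using summable_on_UNIV_nonneg_real_iff[of "\<lambda>m. a m * suminf b"] sa
      by (simp add: a0 b0 suminf_nonneg sb summable_mult2)
  show ?thesis
  apply (rule summable_on_SigmaI[where g = "\<lambda>m. a m * suminf b"])
  using hs apply simp
  using t2 apply simp
  using a0 b0 apply simp
  done
qed

lemma swap_aux2:
  fixes a b :: "nat \<Rightarrow> real" and f :: "nat \<Rightarrow> nat \<Rightarrow> complex"
  assumes bnd: "\<And>m k. norm (f m k) \<le> a m * b k" and a0: "\<And>m. 0 \<le> a m" and b0: "\<And>k. 0 \<le> b k"
  and h: "(\<lambda>(m,k). a m * b k) summable_on Sigma UNIV (\<lambda>_. UNIV)"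
shows "(\<lambda>(m,k). f m k) summable_on Sigma UNIV (\<lambda>_. UNIV)"
proof -
  from h have "(\<lambda>x. norm (case x of (m,k) \<Rightarrow> a m * b k)) summable_on Sigma UNIV (\<lambda>_. UNIV)"
    by (rule summable_on_iff_abs_summable_on_real[THEN iffD1])
  hence "(\<lambda>x. norm (case x of (m,k) \<Rightarrow> f m k)) summable_on Sigma UNIV (\<lambda>_. UNIV)"
  proof (rule Infinite_Sum.abs_summable_on_comparison_test[where g="\<lambda>(m,k). a m * b k"])
    fix x :: "nat \<times> nat"
    obtain m k where x: "x = (m,k)" by (cases x)
    have "norm (f m k) \<le> norm (a m * b k)"
      using bnd[of m k] a0[of m] b0[of k] by simp
    thus "norm (case x of (m,k) \<Rightarrow> f m k) \<le> norm (case x of (m,k) \<Rightarrow> a m * b k)"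
      by (simp add: x)
  qed
  thus ?thesis
    by (rule Infinite_Sum.abs_summable_summable)
qed

lemma swap_suminf:
  fixes f :: "nat \<Rightarrow> nat \<Rightarrow> complex"
  assumes bnd: "\<And>m k. norm (f m k) \<le> a m * b k" and sa: "summable a" and sb: "summable b"
    and a0: "\<And>m. 0 \<le> a m" and b0: "\<And>k. 0 \<le> b k"
  shows "(\<Sum>m. \<Sum>k. f m k) = (\<Sum>k. \<Sum>m. f m k)" "summable (\<lambda>k. \<Sum>m. f m k)"
    "summable (\<lambda>m. \<Sum>k. f m k)"
proof -
  have sm: "(\<lambda>(m,k). f m k) summable_on Sigma UNIV (\<lambda>_. UNIV)"
    by (rule swap_aux2[OF bnd a0 b0 swap_aux1[OF sa sb a0 b0]])
  have sw: "infsum (\<lambda>m. infsum (\<lambda>k. f m k) UNIV) UNIV = infsum (\<lambda>k. infsum (\<lambda>m. f m k) UNIV) UNIV"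
    by (rule infsum_swap_banach[OF sm])
  have n1: "summable (\<lambda>k. norm (f m k))" for m
    by (rule summable_comparison_test[of _ "\<lambda>k. a m * b k"]) (auto intro!: bnd summable_mult sb)
  have n2: "summable (\<lambda>m. norm (f m k))" for k
    by (rule summable_comparison_test[of _ "\<lambda>m. a m * b k"]) (auto intro!: bnd summable_mult2 sa)
  have i1: "infsum (\<lambda>k. f m k) UNIV = (\<Sum>k. f m k)" for m by (rule infsum_suminf_c[OF n1])
  have i2: "infsum (\<lambda>m. f m k) UNIV = (\<Sum>m. f m k)" for k by (rule infsum_suminf_c[OF n2])
  have le1: "norm (\<Sum>k. f m k) \<le> a m * suminf b" for m
  proof -
    have "norm (\<Sum>k. f m k) \<le> (\<Sum>k. norm (f m k))" by (rule summable_norm[OF n1])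
    also have "\<dots> \<le> (\<Sum>k. a m * b k)" by (rule suminf_le) (auto intro!: bnd n1 summable_mult sb)
    also have "\<dots> = a m * suminf b" by (rule suminf_mult[OF sb])
    finally show ?thesis .
  qed
  have le2: "norm (\<Sum>m. f m k) \<le> suminf a * b k" for k
  proof -
    have "norm (\<Sum>m. f m k) \<le> (\<Sum>m. norm (f m k))" by (rule summable_norm[OF n2])
    also have "\<dots> \<le> (\<Sum>m. a m * b k)" by (rule suminf_le) (auto intro!: bnd n2 summable_mult2 sa)
    also have "\<dots> = suminf a * b k" using suminf_mult2[OF sa, of "b k"] by simp
    finally show ?thesis .
  qed
  have n3: "summable (\<lambda>m. norm (\<Sum>k. f m k))"
    by (rule summable_comparison_test[of _ "\<lambda>m. a m * suminf b"]) (auto intro!: le1 summable_mult2 sa)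
  have n4: "summable (\<lambda>k. norm (\<Sum>m. f m k))"
    by (rule summable_comparison_test[of _ "\<lambda>k. suminf a * b k"]) (auto intro!: le2 summable_mult sb)
  show "(\<Sum>m. \<Sum>k. f m k) = (\<Sum>k. \<Sum>m. f m k)"
  proof -
    have e1: "infsum (\<lambda>m. infsum (\<lambda>k. f m k) UNIV) UNIV = (\<Sum>m. \<Sum>k. f m k)"
      unfolding i1 by (rule infsum_suminf_c[OF n3])
    have e2: "infsum (\<lambda>k. infsum (\<lambda>m. f m k) UNIV) UNIV = (\<Sum>k. \<Sum>m. f m k)"
      unfolding i2 by (rule infsum_suminf_c[OF n4])
    show ?thesis using sw unfolding e1 e2 .
  qed
  show "summable (\<lambda>k. \<Sum>m. f m k)" by (rule summable_norm_cancel[OF n4])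
  show "summable (\<lambda>m. \<Sum>k. f m k)" by (rule summable_norm_cancel[OF n3])
qed

lemma holo_isCont:
  "f holomorphic_on S \<Longrightarrow> open S \<Longrightarrow> x \<in> S \<Longrightarrow> isCont f x"
  using holomorphic_on_imp_continuous_on continuous_on_eq_continuous_at by blast

lemma bigo_cont_factor:
  fixes g h :: "complex \<Rightarrow> complex"
  assumes "isCont g 0"
  shows "(\<lambda>s. h s * g s) \<in> O[at 0](h)"
proof -
  have "g \<midarrow>0\<rightarrow> g 0" using assms isCont_def by blast
  hence "eventually (\<lambda>s. dist (g s) (g 0) < 1) (at 0)"
    by (rule tendstoD) simp
  hence "eventually (\<lambda>s. norm (h s * g s) \<le> (norm (g 0) + 1) * norm (h s)) (at 0)"
  proof (rule eventually_mono)
    fix s assume "dist (g s) (g 0) < 1"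
    hence "norm (g s) \<le> norm (g 0) + 1"
      by (metis add.commute dist_norm less_eq_real_def norm_triangle_sub order_trans add_le_cancel_left)
    hence "norm (h s) * norm (g s) \<le> norm (h s) * (norm (g 0) + 1)"
      by (rule mult_left_mono) simp
    thus "norm (h s * g s) \<le> (norm (g 0) + 1) * norm (h s)"
      by (simp add: norm_mult mult.commute)
  qed
  thus ?thesis by (rule bigoI)
qed

lemma bigo_cont_factor':
  fixes g h f :: "complex \<Rightarrow> complex"
  assumes "isCont g 0" "eventually (\<lambda>s. f s = h s * g s) (at 0)"
  shows "f \<in> O[at 0](h)"
  using bigo_cont_factor[OF assms(1), of h] landau_o.big.in_cong[OF assms(2)] by simp

lemma taylor1_bigo:
  fixes f :: "complex \<Rightarrow> complex"
  assumes "f holomorphic_on ball 0 r" "0 < r"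
  shows "(\<lambda>s. f s - f 0) \<in> O[at 0](\<lambda>s. s)"
proof -
  define g where "g = (\<lambda>z. if z = 0 then deriv f 0 else (f z - f 0) / (z - 0))"
  have "g holomorphic_on ball 0 r"
    unfolding g_def by (rule pole_lemma_open[OF assms(1)]) simp
  hence "isCont g 0" using assms(2)
    by (intro holo_isCont[of _ "ball 0 r"]) auto
  moreover have "eventually (\<lambda>s. f s - f 0 = s * g s) (at 0)"
    by (simp add: eventually_at_filter g_def)
  ultimately show ?thesis by (rule bigo_cont_factor')
qed

lemma taylor2_bigo:
  fixes f :: "complex \<Rightarrow> complex"
  assumes "f holomorphic_on ball 0 r" "0 < r"
  shows "(\<lambda>s. f s - f 0 - deriv f 0 * s) \<in> O[at 0](\<lambda>s. s^2)"
proof -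
  define g where "g = (\<lambda>z. if z = 0 then deriv f 0 else (f z - f 0) / (z - 0))"
  have hg: "g holomorphic_on ball 0 r"
    unfolding g_def by (rule pole_lemma_open[OF assms(1)]) simp
  define h where "h = (\<lambda>z. if z = 0 then deriv g 0 else (g z - g 0) / (z - 0))"
  have "h holomorphic_on ball 0 r"
    unfolding h_def by (rule pole_lemma_open[OF hg]) simp
  hence "isCont h 0" using assms(2)
    by (intro holo_isCont[of _ "ball 0 r"]) auto
  moreover have "eventually (\<lambda>s. f s - f 0 - deriv f 0 * s = s^2 * h s) (at 0)"
    by (simp add: eventually_at_filter g_def h_def power2_eq_square field_simps)
  ultimately show ?thesis by (rule bigo_cont_factor')
qed

lemma powser_bigo:
  fixes a :: "nat \<Rightarrow> complex" and f :: "complex \<Rightarrow> complex"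
  assumes sums: "\<And>s. (\<lambda>n. a n * s ^ n) sums f s" and z: "\<And>n. n < k \<Longrightarrow> a n = 0"
  shows "f \<in> O[at 0](\<lambda>s. s ^ k)"
proof -
  define g where "g = (\<lambda>s. \<Sum>n. a (n + k) * s ^ n)"
  have sh: "(\<lambda>n. a (n + k) * s ^ (n + k)) sums f s" for s
    using sums_zero_iff_shift[of k "\<lambda>n. a n * s ^ n" "f s"] sums[of s] z by simp
  have sg: "(\<lambda>n. a (n + k) * s ^ n) sums g s" if "s \<noteq> 0" for s
  proof -
    have "(\<lambda>n. inverse (s ^ k) * (a (n + k) * s ^ (n + k))) sums (inverse (s ^ k) * f s)"
      by (rule sums_mult[OF sh])
    moreover have "inverse (s ^ k) * (a (n + k) * s ^ (n + k)) = a (n + k) * s ^ n" for n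
      using that by (simp add: power_add field_simps)
    ultimately have "(\<lambda>n. a (n + k) * s ^ n) sums (inverse (s ^ k) * f s)" by simp
    thus ?thesis unfolding g_def by (simp add: sums_iff)
  qed
  have "summable (\<lambda>n. a (n + k) * 1 ^ n)"
    using sg[of 1] by (simp add: sums_iff)
  hence "isCont g 0" unfolding g_def
    by (rule isCont_powser) simp
  moreover have "eventually (\<lambda>s. f s = s ^ k * g s) (at 0)"
    unfolding eventually_at_filter
  proof (rule always_eventually, intro allI impI)
    fix s :: complex assume "s \<noteq> 0"
    have "(\<lambda>n. s ^ k * (a (n + k) * s ^ n)) sums (s ^ k * g s)"
      by (rule sums_mult[OF sg[OF \<open>s \<noteq> 0\<close>]])
    moreover have "s ^ k * (a (n + k) * s ^ n) = a (n + k) * s ^ (n + k)" for n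
      by (simp add: power_add)
    ultimately have "(\<lambda>n. a (n + k) * s ^ (n + k)) sums (s ^ k * g s)" by simp
    thus "f s = s ^ k * g s" using sh[of s] sums_unique2 by blast
  qed
  ultimately show ?thesis by (rule bigo_cont_factor')
qed

lemma exp_rem_bigo:
  fixes c :: complex
  shows "(\<lambda>s. exp (c * s) - (\<Sum>n<k. c ^ n / fact n * s ^ n)) \<in> O[at 0](\<lambda>s. s ^ k)"
proof (rule powser_bigo)
  fix s :: complex
  have e: "(\<lambda>n. c ^ n / fact n * s ^ n) sums exp (c * s)"
    using exp_converges[of "c * s"] by (simp add: power_mult_distrib scaleR_conv_of_real divide_inverse mult_ac)
  have p: "(\<lambda>n. if n < k then c ^ n / fact n * s ^ n else 0) sums (\<Sum>n<k. c ^ n / fact n * s ^ n)"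
    using sums_finite[of "{..<k}" "\<lambda>n. if n < k then c ^ n / fact n * s ^ n else 0"] by simp
  show "(\<lambda>n. (if n < k then 0 else c ^ n / fact n) * s ^ n) sums
        (exp (c * s) - (\<Sum>n<k. c ^ n / fact n * s ^ n))"
  proof -
    have eq: "c ^ n / fact n * s ^ n - (if n < k then c ^ n / fact n * s ^ n else 0) =
       (if n < k then 0 else c ^ n / fact n) * s ^ n" for n by simp
    show ?thesis using sums_diff[OF e p] unfolding eq .
  qed
qed simp

locale qz =
  fixes q :: real and z :: complex
  assumes q0: "0 < q" and q1: "q < 1" and hz: "0 < Re z"
begin

definition L :: real where "L = ln q"

lemma L_neg: "L < 0" unfolding L_def using q0 q1 by simp

lemma L_ne0: "L \<noteq> 0" using L_neg by simp

lemma exp_L: "exp L = q" unfolding L_def using q0 by simp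

definition E :: "complex \<Rightarrow> complex" where "E w = exp (w * complex_of_real L)"

lemma norm_E: "norm (E w) = exp (Re w * L)"
  unfolding E_def by (simp add: norm_exp_eq_Re)

lemma E_add: "E (a + b) = E a * E b"
  unfolding E_def by (simp add: distrib_right exp_add)

lemma E_0 [simp]: "E 0 = 1" unfolding E_def by simp

lemma E_ne0 [simp]: "E w \<noteq> 0" unfolding E_def by simp

lemma E_nat_mult: "E (of_nat n * w) = E w ^ n"
  unfolding E_def by (metis exp_of_nat_mult mult.assoc)

lemma E_1: "E 1 = of_real q"
  unfolding E_def by (simp add: exp_of_real exp_L)

lemma E_nat: "E (of_nat n) = of_real (q ^ n)"
  using E_nat_mult[of n 1] E_1 by simp

lemma norm_E_le: "1 \<le> Re w \<Longrightarrow> norm (E w) \<le> q"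
proof -
  assume "1 \<le> Re w"
  hence "Re w * L \<le> 1 * L" using L_neg by (intro mult_right_mono_neg) auto
  hence "exp (Re w * L) \<le> exp L" by simp
  thus ?thesis unfolding norm_E exp_L .
qed

lemma norm_E_lt1: "0 < Re w \<Longrightarrow> norm (E w) < 1"
proof -
  assume "0 < Re w"
  hence "Re w * L < 0" using L_neg by (simp add: mult_pos_neg)
  thus ?thesis unfolding norm_E by simp
qed

lemma E_holo: "(\<lambda>s. E (s + c)) holomorphic_on A"
  unfolding E_def by (intro holomorphic_intros)

lemma E_cont: "continuous_on A (\<lambda>s. E (s + c))"
  unfolding E_def by (intro continuous_intros)

lemma E_deriv: "((\<lambda>s. E (s + c)) has_field_derivative (E (w + c) * of_real L)) (at w)"
  unfolding E_def by (auto intro!: derivative_eq_intros)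

definition dl :: complex where "dl = complex_of_real (2 * pi / L) * \<i>"

lemma Re_dl [simp]: "Re dl = 0" by (simp add: dl_def)

lemma Re_dl_int [simp]: "Re (dl * of_int l) = 0" by (simp add: dl_def)

lemma norm_dl_pos: "0 < norm dl" using L_ne0 by (simp add: dl_def)

lemma E_eq_1: "E w = 1 \<longleftrightarrow> (\<exists>l::int. w = dl * of_int l)"
proof
  assume "E w = 1"
  hence "exp (w * of_real L) = exp 0" by (simp add: E_def)
  then obtain n :: int where n: "w * of_real L = 0 + complex_of_real (real_of_int (2 * n) * pi) * \<i>"
    unfolding exp_eq by blast
  have "w = dl * of_int n"
    using n L_ne0 by (simp add: dl_def field_simps)
  thus "\<exists>l::int. w = dl * of_int l" by blast
next
  assume "\<exists>l::int. w = dl * of_int l"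
  then obtain l :: int where l: "w = dl * of_int l" by blast
  have "w * of_real L = 0 + complex_of_real (real_of_int (2 * l) * pi) * \<i>"
    using L_ne0 by (simp add: l dl_def field_simps)
  hence "exp (w * of_real L) = exp 0" unfolding exp_eq by blast
  thus "E w = 1" by (simp add: E_def)
qed

definition Pset :: "complex set" where
  "Pset = {s. \<exists>r::nat. \<exists>l::int. s = - of_nat r + dl * of_int l}"

lemma E_shift_eq1_iff: "E (s + of_nat m) = 1 \<longleftrightarrow> (\<exists>l::int. s = - of_nat m + dl * of_int l)"
  unfolding E_eq_1 by (metis add_diff_cancel_right' diff_conv_add_uminus add.commute)

lemma E_shift_eq1_P: "E (s + of_nat m) = 1 \<Longrightarrow> s \<in> Pset"
  unfolding E_shift_eq1_iff Pset_def by blast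

lemma notP_E: "s \<notin> Pset \<Longrightarrow> E (s + of_nat m) \<noteq> 1"
  using E_shift_eq1_P by blast

lemma P_sep:
  assumes "p1 \<in> Pset" "p2 \<in> Pset" "norm (p1 - p2) < min 1 (norm dl)"
  shows "p1 = p2"
proof -
  obtain r1 l1 where p1: "p1 = - of_nat r1 + dl * of_int l1" using assms(1) unfolding Pset_def by blast
  obtain r2 l2 where p2: "p2 = - of_nat r2 + dl * of_int l2" using assms(2) unfolding Pset_def by blast
  have "Re (p1 - p2) = real r2 - real r1" by (simp add: p1 p2)
  moreover have "\<bar>Re (p1 - p2)\<bar> < 1" using abs_Re_le_cmod[of "p1 - p2"] assms(3) by linarith
  ultimately have "r1 = r2" by linarith
  hence d: "p1 - p2 = dl * of_int (l1 - l2)" by (simp add: p1 p2 algebra_simps)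
  have "norm (p1 - p2) = norm dl * \<bar>real_of_int (l1 - l2)\<bar>"
    unfolding d norm_mult by (simp only: norm_of_int)
  hence "norm dl * \<bar>real_of_int (l1 - l2)\<bar> < norm dl * 1"
    using assms(3) by simp
  hence "\<bar>real_of_int (l1 - l2)\<bar> < 1" using norm_dl_pos by (simp only: mult_less_cancel_left_pos)
  hence "l1 = l2" by linarith
  thus ?thesis using \<open>r1 = r2\<close> by (simp add: p1 p2)
qed

definition cc :: "nat \<Rightarrow> complex \<Rightarrow> complex" where "cc m s = pochhammer s m / fact m"

definition T :: "nat \<Rightarrow> complex \<Rightarrow> complex" where
  "T m s = cc m s * E (of_nat m * z) / (1 - E (s + of_nat m))"

lemma cc_holo: "cc m holomorphic_on A"
  unfolding cc_def pochhammer_prod by (intro holomorphic_intros) auto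

lemma T_holo:
  assumes "\<And>s. s \<in> A \<Longrightarrow> E (s + of_nat m) \<noteq> 1"
  shows "T m holomorphic_on A"
proof -
  have "(\<lambda>s. cc m s * E (of_nat m * z)) holomorphic_on A"
    by (intro holomorphic_on_mult cc_holo holomorphic_on_const)
  moreover have "(\<lambda>s. 1 - E (s + of_nat m)) holomorphic_on A"
    by (intro holomorphic_on_diff holomorphic_on_const E_holo)
  ultimately have "(\<lambda>s. cc m s * E (of_nat m * z) / (1 - E (s + of_nat m))) holomorphic_on A"
    using assms by (intro holomorphic_on_divide) auto
  thus ?thesis unfolding T_def[abs_def] .
qed

definition xz :: real where "xz = exp (Re z * L)"

lemma xz_pos: "0 < xz" unfolding xz_def by simp

lemma xz_lt1: "xz < 1"
  unfolding xz_def using hz L_neg by (simp add: mult_pos_neg)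

lemma norm_E_mz: "norm (E (of_nat m * z)) = xz ^ m"
  unfolding norm_E xz_def by (simp add: exp_of_nat_mult[symmetric] mult_ac)

definition hb :: "real \<Rightarrow> nat \<Rightarrow> real" where
  "hb R m = pochhammer R m / fact m * xz ^ m / (1 - q)"

lemma summable_hb: "summable (hb R)"
  unfolding hb_def using summable_poch_geom[of xz R] xz_pos xz_lt1
  by (intro summable_divide) simp

lemma norm_cc_le: "norm s \<le> R \<Longrightarrow> norm (cc m s) \<le> pochhammer R m / fact m"
proof -
  assume a: "norm s \<le> R"
  have "norm (cc m s) = norm (pochhammer s m) / fact m"
    unfolding cc_def norm_divide by (simp add: norm_fact)
  also have "\<dots> \<le> pochhammer R m / fact m"
    by (intro divide_right_mono order_trans[OF norm_pochhammer_le] pochhammer_mono0) (use a in auto)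
  finally show ?thesis .
qed

lemma T_bound:
  assumes "norm s \<le> R" "R + 1 \<le> of_nat m"
  shows "norm (T m s) \<le> hb R m"
proof -
  have R0: "0 \<le> R" using norm_ge_zero[of s] assms(1) by linarith
  have "- R \<le> Re s" using abs_Re_le_cmod[of s] assms(1) by linarith
  hence "1 \<le> Re (s + of_nat m)" using assms(2) by simp
  hence "norm (E (s + of_nat m)) \<le> q" by (rule norm_E_le)
  hence d: "1 - q \<le> norm (1 - E (s + of_nat m))"
    using norm_triangle_ineq2[of 1 "E (s + of_nat m)"] by simp
  have "norm (T m s) = norm (cc m s) * xz ^ m / norm (1 - E (s + of_nat m))"
    unfolding T_def by (simp add: norm_mult norm_divide norm_E_mz)
  also have "\<dots> \<le> pochhammer R m / fact m * xz ^ m / (1 - q)"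
    using q1 xz_pos norm_cc_le[OF assms(1), of m] d R0
    by (intro frac_le mult_right_mono mult_nonneg_nonneg) (auto intro!: divide_nonneg_pos pochhammer_nonneg0)
  finally show ?thesis unfolding hb_def .
qed

end

context qz
begin

definition Tl :: "nat \<Rightarrow> complex \<Rightarrow> complex" where "Tl N s = (\<Sum>n. T (n + N) s)"

lemma Nof: "R + 1 \<le> real (nat \<lceil>R\<rceil> + 1)" using of_nat_ceiling[of R] by simp

lemma Re_shift_ge1: "norm s \<le> R \<Longrightarrow> R + 1 \<le> of_nat m \<Longrightarrow> 1 \<le> Re (s + of_nat m)"
  using abs_Re_le_cmod[of s] by simp

lemma T_holo_big:
  assumes "R + 1 \<le> of_nat m"
  shows "T m holomorphic_on ball 0 R"
proof (rule T_holo)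
  fix s assume "s \<in> ball (0::complex) R"
  hence "norm s \<le> R" by simp
  hence "norm (E (s + of_nat m)) \<le> q" using Re_shift_ge1 assms norm_E_le by blast
  thus "E (s + of_nat m) \<noteq> 1" using q1 by auto
qed

lemma tail_props:
  assumes R: "0 < R" "R + 1 \<le> real N"
  shows "Tl N holomorphic_on ball 0 R"
    "\<And>s. s \<in> ball 0 R \<Longrightarrow> (\<lambda>n. T (n + N) s) sums Tl N s"
    "\<And>s. s \<in> ball 0 R \<Longrightarrow> (\<lambda>n. deriv (T (n + N)) s) sums deriv (Tl N) s"
proof -
  have hol: "T (n + N) holomorphic_on ball 0 R" for n by (rule T_holo_big) (use R(2) in simp)
  have o: "open (ball (0::complex) R)" by simp
  have sh: "summable (\<lambda>n. hb R (n + N))" using summable_hb[of R] by simp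
  have hfd: "\<And>n x. x \<in> ball 0 R \<Longrightarrow> (T (n + N) has_field_derivative deriv (T (n + N)) x) (at x)"
    by (rule holomorphic_derivI[OF hol o])
  have tog: "\<forall>\<^sub>F n in sequentially. \<forall>x\<in>ball 0 R. norm (T (n + N) x) \<le> hb R (n + N)"
    by (intro always_eventually allI ballI T_bound) (use R(2) in auto)
  obtain g g' where H: "\<forall>x\<in>ball 0 R. ((\<lambda>n. T (n + N) x) sums g x) \<and>
      ((\<lambda>n. deriv (T (n + N)) x) sums g' x) \<and> (g has_field_derivative g' x) (at x)"
    by (rule series_and_derivative_comparison[OF o sh hfd tog])
  have eq: "Tl N x = g x" if "x \<in> ball 0 R" for x
    using H that unfolding Tl_def by (auto simp: sums_iff)
  have D: "(Tl N has_field_derivative g' x) (at x)" if "x \<in> ball 0 R" for x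
    using has_field_derivative_transform_within_open[of g "g' x" x "ball 0 R" "Tl N"] H eq that o
    by auto
  show "Tl N holomorphic_on ball 0 R" using D holomorphic_on_open[OF o] by blast
  show "(\<lambda>n. T (n + N) s) sums Tl N s" if "s \<in> ball 0 R" for s using H eq that by auto
  show "(\<lambda>n. deriv (T (n + N)) s) sums deriv (Tl N) s" if "s \<in> ball 0 R" for s
    using H that DERIV_imp_deriv[OF D[OF that]] by auto
qed

lemma T_summable: "summable (\<lambda>m. T m s)"
proof -
  define R where "R = norm s + 1"
  define N where "N = nat \<lceil>R\<rceil> + 1"
  have R0: "0 < R" unfolding R_def using norm_ge_zero[of s] by linarith
  have R: "0 < R" "R + 1 \<le> real N" using R0 unfolding N_def by (auto intro: Nof)
  have "s \<in> ball 0 R" by (simp add: R_def)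
  from tail_props(2)[OF R this] have "summable (\<lambda>n. T (n + N) s)" by (rule sums_summable)
  thus ?thesis by (rule summable_iff_shift[THEN iffD1])
qed

lemma sum_split: "(\<Sum>m. T m s) = (\<Sum>m<N. T m s) + Tl N s"
  using suminf_split_initial_segment[OF T_summable[of s], where k=N] by (simp add: Tl_def add.commute)

definition A :: real where "A = ln (q - q^2)"

definition FF :: "complex \<Rightarrow> complex" where "FF s = exp (s * of_real A) * (\<Sum>m. T m s)"

lemma open_goodset: "open {s. \<forall>m<N. P m \<longrightarrow> E (s + of_nat m) \<noteq> 1}"
proof -
  have "{s. \<forall>m<N. P m \<longrightarrow> E (s + of_nat m) \<noteq> 1} = (\<Inter>m\<in>{m. m < N \<and> P m}. {s. E (s + of_nat m) \<noteq> 1})"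
    by auto
  also have "open \<dots>"
    by (intro open_INT ballI open_Collect_neq E_cont continuous_on_const) auto
  finally show ?thesis .
qed

lemma FF_local:
  assumes R: "0 < R" "R + 1 \<le> real N"
  shows "FF holomorphic_on (ball 0 R \<inter> {s. \<forall>m<N. True \<longrightarrow> E (s + of_nat m) \<noteq> 1})"
proof -
  let ?U = "ball 0 R \<inter> {s. \<forall>m<N. True \<longrightarrow> E (s + of_nat m) \<noteq> 1}"
  have "(\<lambda>s. exp (s * of_real A) * ((\<Sum>m<N. T m s) + Tl N s)) holomorphic_on ?U"
  proof (intro holomorphic_on_mult holomorphic_on_add holomorphic_on_sum)
    show "(\<lambda>s. exp (s * complex_of_real A)) holomorphic_on ?U" by (intro holomorphic_intros)
    show "T m holomorphic_on ?U" if "m \<in> {..<N}" for m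
      by (rule T_holo) (use that in auto)
    show "Tl N holomorphic_on ?U"
      by (rule holomorphic_on_subset[OF tail_props(1)[OF R]]) auto
  qed
  thus ?thesis by (rule holomorphic_transform) (simp add: FF_def sum_split[of _ N])
qed

lemma FF_diff:
  assumes "s0 \<notin> Pset"
  shows "FF field_differentiable (at s0)"
proof -
  define R where "R = norm s0 + 1"
  define N where "N = nat \<lceil>R\<rceil> + 1"
  have R0: "0 < R" unfolding R_def using norm_ge_zero[of s0] by linarith
  have R: "0 < R" "R + 1 \<le> real N" using R0 unfolding N_def by (auto intro: Nof)
  have "open (ball 0 R \<inter> {s. \<forall>m<N. True \<longrightarrow> E (s + of_nat m) \<noteq> 1})"
    by (intro open_Int open_ball open_goodset)
  moreover have "s0 \<in> ball 0 R \<inter> {s. \<forall>m<N. True \<longrightarrow> E (s + of_nat m) \<noteq> 1}"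
    using notP_E[OF assms] by (auto simp: R_def)
  ultimately show ?thesis
    using holomorphic_on_imp_differentiable_at[OF FF_local[OF R]] by blast
qed

lemma FF_holo: "FF holomorphic_on (- Pset)"
  unfolding holomorphic_on_def using FF_diff field_differentiable_at_within by blast

end

context qz
begin

lemma pole_at:
  assumes p: "p = - of_nat r + dl * of_int l"
  shows "is_pole FF p \<and> zorder FF p = -1"
proof -
  define R where "R = norm p + 1"
  define N where "N = nat \<lceil>R\<rceil> + 1"
  have R0: "0 < R" unfolding R_def using norm_ge_zero[of p] by linarith
  have R: "0 < R" "R + 1 \<le> real N" using R0 unfolding N_def by (auto intro: Nof)
  have Rep: "Re p = - real r" by (simp add: p)
  have "real r \<le> norm p" using abs_Re_le_cmod[of p] Rep by simp
  hence rN: "r < N" using R(2) unfolding R_def by linarith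
  define f where "f = (\<lambda>s. 1 - E (s + of_nat r))"
  have fp: "f p = 0" unfolding f_def using E_shift_eq1_iff[of p r] p by auto
  have Ep: "E (p + of_nat r) = 1" using fp by (simp add: f_def)
  have fd: "(f has_field_derivative (- of_real L)) (at p)"
    unfolding f_def using E_deriv[of "of_nat r" p] Ep
    by (auto intro!: derivative_eq_intros)
  have fholo: "f holomorphic_on UNIV" unfolding f_def by (intro holomorphic_intros E_holo)
  define \<phi> where "\<phi> = (\<lambda>s. if s = p then deriv f p else (f s - f p) / (s - p))"
  have phiholo: "\<phi> holomorphic_on UNIV" unfolding \<phi>_def by (rule pole_lemma_open[OF fholo]) simp
  have phip: "\<phi> p = - of_real L" unfolding \<phi>_def using DERIV_imp_deriv[OF fd] by simp
  have phip0: "\<phi> p \<noteq> 0" using phip L_ne0 by simp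
  have fphi: "f w = \<phi> w * (w - p)" if "w \<noteq> p" for w
    using that fp unfolding \<phi>_def by simp
  define U where "U = ball 0 R \<inter> {s. \<forall>m<N. m \<noteq> r \<longrightarrow> E (s + of_nat m) \<noteq> 1} \<inter> {s. \<phi> s \<noteq> 0}"
  have oU: "open U" unfolding U_def
    by (intro open_Int open_ball open_goodset open_Collect_neq holomorphic_on_imp_continuous_on[OF phiholo]
        continuous_on_const)
  have pU: "p \<in> U"
  proof -
    have "E (p + of_nat m) \<noteq> 1" if "m \<noteq> r" for m
    proof
      assume "E (p + of_nat m) = 1"
      then obtain l' :: int where "p = - of_nat m + dl * of_int l'" using E_shift_eq1_iff by blast
      hence "Re p = - real m" by simp
      with Rep that show False by simp
    qed
    thus ?thesis unfolding U_def using phip0 by (auto simp: R_def)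
  qed
  define g where "g = (\<lambda>s. exp (s * of_real A) * (cc r s * E (of_nat r * z) / \<phi> s +
      (s - p) * ((\<Sum>m\<in>{..<N} - {r}. T m s) + Tl N s)))"
  have gholo: "g holomorphic_on U" unfolding g_def
  proof (intro holomorphic_on_mult holomorphic_on_add holomorphic_on_divide holomorphic_on_sum
      holomorphic_on_diff holomorphic_on_const cc_holo holomorphic_on_subset[OF phiholo])
    show "(\<lambda>s. exp (s * of_real A)) holomorphic_on U" by (intro holomorphic_intros)
    show "(\<lambda>s. s) holomorphic_on U" by (intro holomorphic_intros)
    show "T m holomorphic_on U" if "m \<in> {..<N} - {r}" for m
      by (rule T_holo) (use that in \<open>auto simp: U_def\<close>)
    show "Tl N holomorphic_on U"
      by (rule holomorphic_on_subset[OF tail_props(1)[OF R]]) (auto simp: U_def)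
  qed (auto simp: U_def)
  have cc0: "cc r p \<noteq> 0"
  proof
    assume "cc r p = 0"
    hence "pochhammer p r = 0" by (simp add: cc_def)
    then obtain k where "k < r" "p = - of_nat k" unfolding pochhammer_eq_0_iff by blast
    hence "Re p = - real k" by simp
    with Rep \<open>k < r\<close> show False by simp
  qed
  have gp: "g p \<noteq> 0" unfolding g_def using cc0 phip0 by simp
  have feq: "FF w = g w * (w - p) powi (-1)" if "w \<in> U" "w \<noteq> p" for w
  proof -
    have wp: "w - p \<noteq> 0" using that by simp
    have phw: "\<phi> w \<noteq> 0" using that by (simp add: U_def)
    have "(\<Sum>m<N. T m w) = T r w + (\<Sum>m\<in>{..<N} - {r}. T m w)"
      by (rule sum.remove) (use rN in auto)
    moreover have "T r w = cc r w * E (of_nat r * z) / (\<phi> w * (w - p))"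
      unfolding T_def using fphi[OF that(2)] by (simp add: f_def)
    ultimately have "FF w = exp (w * of_real A) * (cc r w * E (of_nat r * z) / (\<phi> w * (w - p)) +
        (\<Sum>m\<in>{..<N} - {r}. T m w) + Tl N w)"
      unfolding FF_def sum_split[of w N] by simp
    also have "\<dots> = g w * (w - p) powi (-1)"
      unfolding g_def using wp phw by (simp add: power_int_minus field_simps)
    finally show ?thesis .
  qed
  have "zorder FF p = -1" by (rule zorder_eqI[OF oU pU gholo gp feq])
  moreover have "is_pole FF p"
  proof -
    have "is_pole (\<lambda>w. g w / (w - p) ^ 1) p" by (rule is_pole_basic[OF gholo oU pU gp]) simp
    moreover have "eventually (\<lambda>w. g w / (w - p) ^ 1 = FF w) (at p)"
      using eventually_at_in_open[OF oU pU]
      by eventually_elim (simp add: feq power_int_minus divide_inverse)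
    ultimately show ?thesis by (rule is_pole_transform) simp
  qed
  ultimately show ?thesis by simp
qed

lemma P_iso: "\<exists>e>0. \<forall>w\<in>ball x e - {x}. w \<notin> Pset"
proof -
  define d where "d = min 1 (norm dl) / 2"
  have d0: "0 < d" unfolding d_def using norm_dl_pos by simp
  show ?thesis
  proof (cases "\<exists>y\<in>Pset. y \<in> ball x d \<and> y \<noteq> x")
    case True
    then obtain y where y: "y \<in> Pset" "y \<in> ball x d" "y \<noteq> x" by blast
    show ?thesis
    proof (intro exI[of _ "dist x y"] conjI ballI)
      show "0 < dist x y" using y by simp
      fix w assume w: "w \<in> ball x (dist x y) - {x}"
      show "w \<notin> Pset"
      proof
        assume wP: "w \<in> Pset"
        have "dist x w < dist x y" using w by simp
        have "norm (w - y) \<le> dist w x + dist x y"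
          using dist_triangle[of w y x] by (simp add: dist_norm)
        also have "\<dots> < 2 * d" using w y by (simp add: dist_commute)
        finally have "norm (w - y) < min 1 (norm dl)" unfolding d_def by simp
        hence "w = y" by (rule P_sep[OF wP y(1)])
        with \<open>dist x w < dist x y\<close> show False by simp
      qed
    qed
  next
    case False
    thus ?thesis using d0 by (intro exI[of _ d]) auto
  qed
qed

lemma FF_mero: "FF meromorphic_on UNIV"
  unfolding meromorphic_on_altdef
proof (intro ballI conjI)
  fix x :: complex
  obtain e where e: "e > 0" "\<forall>w\<in>ball x e - {x}. w \<notin> Pset" using P_iso by blast
  have "FF holomorphic_on ball x e - {x}"
    by (rule holomorphic_on_subset[OF FF_holo]) (use e in auto)
  thus "isolated_singularity_at FF x"
    by (rule isolated_singularity_at_holomorphic) (use e in auto)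
  show "not_essential FF x"
  proof (cases "x \<in> Pset")
    case True
    then obtain r l where "x = - of_nat r + dl * of_int l" unfolding Pset_def by blast
    thus ?thesis using pole_at unfolding not_essential_def by blast
  next
    case False
    hence "isCont FF x" by (intro field_differentiable_imp_continuous_at FF_diff)
    thus ?thesis unfolding not_essential_def isCont_def by blast
  qed
qed

end

context qz
begin

lemma qnum_E: "qnum q x = (1 - E x) / (1 - of_real q)"
  by (simp add: qnum_def E_def L_def)

lemma A_eq: "A = L + ln (1 - q)"
proof -
  have "q - q^2 = q * (1 - q)" by (simp add: power2_eq_square algebra_simps)
  thus ?thesis unfolding A_def L_def using q0 q1 by (simp add: ln_mult)
qed

lemma binom_term: "((-s) gchoose n) * (-w) ^ n = cc n s * w ^ n"
proof -
  have "((-s) gchoose n) * (-w) ^ n = ((-1)^n * (-1)^n) * (pochhammer s n / fact n * w ^ n)"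
    by (simp add: gbinomial_pochhammer power_minus[of w])
  also have "(-1::complex)^n * (-1)^n = 1" by (simp flip: power_add)
  finally show ?thesis by (simp add: cc_def)
qed

lemma qhz_term_eq:
  fixes s :: complex and k :: nat
  defines "w \<equiv> E (of_nat k + z)"
  shows "qhz_term q z s k = exp (s * of_real A) * E (s * of_nat k) * (1 - w) powr (-s)"
proof -
  have "0 < Re (of_nat k + z)" using hz by simp
  hence nw: "norm w < 1" unfolding w_def by (rule norm_E_lt1)
  hence w1: "1 - w \<noteq> 0" by auto
  have qn: "qnum q (of_nat k + z) = of_real (1 / (1 - q)) * (1 - w)"
    unfolding qnum_E w_def using q1 by (simp add: field_simps)
  have "Ln (qnum q (of_nat k + z)) = Ln (of_real (1 / (1 - q)) * (1 - w))"
    by (simp only: qn)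
  also have "\<dots> = Ln (of_real (1 / (1 - q))) + Ln (1 - w)"
    by (rule Ln_times_of_real) (use q1 w1 in auto)
  also have "Ln (of_real (1 / (1 - q))) = of_real (ln (1 / (1 - q)))"
    by (rule Ln_of_real) (use q1 in simp)
  also have "ln (1 / (1 - q)) = - ln (1 - q)" using q1 by (simp add: ln_div)
  finally have lnq: "Ln (qnum q (of_nat k + z)) = - of_real (ln (1 - q)) + Ln (1 - w)" by simp
  have "qhz_term q z s k = exp (s * of_nat (k + 1) * of_real L - s * Ln (qnum q (of_nat k + z)))"
    unfolding qhz_term_def L_def by (simp add: exp_diff)
  also have "s * of_nat (k + 1) * of_real L - s * Ln (qnum q (of_nat k + z)) =
      s * of_real A + s * of_nat k * of_real L + (- s) * Ln (1 - w)"
    unfolding lnq A_eq by (simp add: algebra_simps)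
  also have "exp \<dots> = exp (s * of_real A) * E (s * of_nat k) * (1 - w) powr (-s)"
    using w1 by (simp add: exp_add exp_diff E_def powr_def exp_minus field_simps)
  finally show ?thesis .
qed

lemma FF_eq:
  assumes s: "0 < Re s"
  shows "FF s = qHurwitz_zeta q z s"
proof -
  define F where "F = (\<lambda>n k. exp (s * of_real A) * cc n s * E (of_nat n * z) * E (s + of_nat n) ^ k)"
  define y where "y = exp (Re s * L)"
  have y0: "0 < y" "y < 1" unfolding y_def using s L_neg by (auto simp: mult_pos_neg)
  have sk: "(\<lambda>k. F n k) sums (exp (s * of_real A) * T n s)" for n
  proof -
    have "0 < Re (s + of_nat n)" using s by simp
    hence "norm (E (s + of_nat n)) < 1" by (rule norm_E_lt1)
    hence "(\<lambda>k. E (s + of_nat n) ^ k) sums (1 / (1 - E (s + of_nat n)))" by (rule geometric_sums)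
    hence "(\<lambda>k. (exp (s * of_real A) * cc n s * E (of_nat n * z)) * E (s + of_nat n) ^ k) sums
        ((exp (s * of_real A) * cc n s * E (of_nat n * z)) * (1 / (1 - E (s + of_nat n))))"
      by (rule sums_mult)
    thus ?thesis unfolding F_def T_def by (simp add: mult_ac)
  qed
  have sn: "(\<lambda>n. F n k) sums qhz_term q z s k" for k
  proof -
    define w where "w = E (of_nat k + z)"
    have "0 < Re (of_nat k + z)" using hz by simp
    hence nw: "norm w < 1" unfolding w_def by (rule norm_E_lt1)
    hence "norm (-w) < 1" by simp
    from gen_binomial_complex[OF this, of "-s"]
    have "(\<lambda>n. cc n s * w ^ n) sums (1 - w) powr (-s)" by (simp add: binom_term)
    hence "(\<lambda>n. (exp (s * of_real A) * E (s * of_nat k)) * (cc n s * w ^ n)) sums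
        ((exp (s * of_real A) * E (s * of_nat k)) * (1 - w) powr (-s))"
      by (rule sums_mult)
    moreover have "(exp (s * of_real A) * E (s * of_nat k)) * (cc n s * w ^ n) = F n k" for n
    proof -
      have "E (s * of_nat k) * w ^ n = E (s * of_nat k + of_nat n * (of_nat k + z))"
        unfolding w_def by (simp add: E_nat_mult E_add)
      also have "s * of_nat k + of_nat n * (of_nat k + z) = of_nat n * z + of_nat k * (s + of_nat n)"
        by (simp add: algebra_simps)
      also have "E \<dots> = E (of_nat n * z) * E (s + of_nat n) ^ k"
        by (simp add: E_nat_mult E_add)
      finally show ?thesis unfolding F_def by (simp add: mult_ac)
    qed
    ultimately show ?thesis using qhz_term_eq[of s k] unfolding w_def by simp
  qed
  define a where "a = (\<lambda>n. norm (exp (s * of_real A)) * (pochhammer (norm s) n / fact n * xz ^ n))"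
  define b where "b = (\<lambda>k. y ^ k)"
  have bnd: "norm (F n k) \<le> a n * b k" for n k
  proof -
    have "Re s * L + of_nat n * L \<le> Re s * L" using mult_nonneg_nonpos[of "real n" L] L_neg by simp
    hence "norm (E (s + of_nat n)) \<le> y" unfolding norm_E y_def by (simp add: distrib_right)
    hence e1: "norm (E (s + of_nat n) ^ k) \<le> y ^ k"
      by (simp add: norm_power power_mono)
    have "norm (F n k) = norm (exp (s * of_real A)) * norm (cc n s) * xz ^ n * norm (E (s + of_nat n) ^ k)"
      unfolding F_def by (simp add: norm_mult norm_E_mz)
    also have "\<dots> \<le> norm (exp (s * of_real A)) * (pochhammer (norm s) n / fact n) * xz ^ n * y ^ k"
      using norm_cc_le[of s "norm s" n] e1 xz_pos
      by (intro mult_mono mult_nonneg_nonneg) (auto intro!: divide_nonneg_nonneg pochhammer_nonneg0)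
    finally show ?thesis unfolding a_def b_def by (simp add: mult_ac)
  qed
  have sa: "summable a" unfolding a_def
    using summable_poch_geom[of xz "norm s"] xz_pos xz_lt1 by (intro summable_mult) simp
  have sb: "summable b" unfolding b_def using y0 by (intro summable_geometric) simp
  have a0: "0 \<le> a n" for n unfolding a_def using xz_pos
    by (intro mult_nonneg_nonneg divide_nonneg_nonneg pochhammer_nonneg0) auto
  have b0: "0 \<le> b k" for k unfolding b_def using y0 by simp
  have sw: "(\<Sum>n. \<Sum>k. F n k) = (\<Sum>k. \<Sum>n. F n k)"
    by (rule swap_suminf(1)[OF bnd sa sb a0 b0])
  have "FF s = (\<Sum>n. exp (s * of_real A) * T n s)"
    unfolding FF_def by (rule suminf_mult[OF T_summable, symmetric])
  also have "\<dots> = (\<Sum>n. \<Sum>k. F n k)" using sk by (simp add: sums_iff)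
  also have "\<dots> = (\<Sum>k. \<Sum>n. F n k)" by (rule sw)
  also have "\<dots> = (\<Sum>k. qhz_term q z s k)" using sn by (simp add: sums_iff)
  finally show ?thesis unfolding qHurwitz_zeta_def .
qed

end

context qz
begin

definition GG :: "complex \<Rightarrow> complex" where "GG s = T 1 s + Tl 2 s"

definition bb :: "nat \<Rightarrow> complex" where
  "bb m = E (of_nat m * z) / (of_nat m * (1 - of_real (q ^ m)))"

lemma FF_GG: "FF s = exp (s * of_real A) * (T 0 s + GG s)"
  unfolding FF_def GG_def sum_split[of s 2] by (simp add: numeral_2_eq_2)

lemma T0: "T 0 s = 1 / (1 - E s)"
  by (simp add: T_def cc_def)

lemma E_ne1_small: "norm s < 1 \<Longrightarrow> 1 \<le> m \<Longrightarrow> E (s + of_nat m) \<noteq> 1"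
proof
  assume "norm s < 1" "1 \<le> m" "E (s + of_nat m) = 1"
  then obtain l :: int where "s = - of_nat m + dl * of_int l" using E_shift_eq1_iff by blast
  hence "Re s = - real m" by simp
  with abs_Re_le_cmod[of s] \<open>norm s < 1\<close> \<open>1 \<le> m\<close> show False by simp
qed

lemma T_holo_small:
  assumes "1 \<le> m" shows "T m holomorphic_on ball 0 1"
proof (rule T_holo)
  fix s :: complex assume "s \<in> ball 0 1"
  thus "E (s + of_nat m) \<noteq> 1" by (intro E_ne1_small) (use assms in auto)
qed

lemma GG_holo: "GG holomorphic_on ball 0 1"
  unfolding GG_def[abs_def]
  by (intro holomorphic_on_add T_holo_small tail_props(1)) auto

lemma T_at0: "1 \<le> m \<Longrightarrow> T m 0 = 0"
  by (cases m) (auto simp: T_def cc_def pochhammer_rec)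

lemma GG0: "GG 0 = 0"
  unfolding GG_def Tl_def by (simp add: T_at0)

lemma deriv_T0:
  assumes "1 \<le> m"
  shows "deriv (T m) 0 = bb m"
proof -
  obtain j where m: "m = Suc j" using assms by (cases m) auto
  define H where "H = (\<lambda>s. pochhammer (s + 1) j / fact m * E (of_nat m * z) / (1 - E (s + of_nat m)))"
  have TH: "T m = (\<lambda>s. s * H s)"
    by (rule ext) (simp add: T_def cc_def H_def m pochhammer_rec)
  have Hholo: "H holomorphic_on ball 0 1"
  proof -
    have "(\<lambda>s. pochhammer (s + 1) j / fact m * E (of_nat m * z)) holomorphic_on ball 0 1"
      unfolding pochhammer_prod by (intro holomorphic_intros) auto
    moreover have "(\<lambda>s. 1 - E (s + of_nat m)) holomorphic_on ball 0 1"
      by (intro holomorphic_on_diff holomorphic_on_const E_holo)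
    ultimately show ?thesis unfolding H_def
      using E_ne1_small assms by (intro holomorphic_on_divide) auto
  qed
  have "(H has_field_derivative deriv H 0) (at 0)"
    by (rule holomorphic_derivI[OF Hholo]) auto
  hence "((\<lambda>s. s * H s) has_field_derivative (1 * H 0 + deriv H 0 * 0)) (at 0)"
    by (intro DERIV_mult DERIV_ident)
  hence "deriv (T m) 0 = H 0" unfolding TH by (simp add: DERIV_imp_deriv)
  also have "H 0 = bb m"
  proof -
    have p1: "pochhammer (1::complex) j = fact j" by (simp add: pochhammer_fact)
    have fm: "(fact m :: complex) = of_nat m * fact j" by (simp add: m fact_Suc)
    have "(of_nat m :: complex) \<noteq> 0" using of_nat_eq_0_iff[of m] m by (metis nat.distinct(1))
    hence "pochhammer (1::complex) j / fact m = 1 / of_nat m"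
      unfolding p1 fm by (simp add: field_simps)
    thus ?thesis unfolding H_def bb_def by (simp add: E_nat)
  qed
  finally show ?thesis .
qed

lemma deriv_GG: "(\<lambda>n. bb (n + 1)) sums deriv GG 0"
proof -
  have R: "(0::real) < 1" "1 + 1 \<le> real 2" by auto
  have d1: "(T 1 has_field_derivative deriv (T 1) 0) (at 0)"
    by (rule holomorphic_derivI[OF T_holo_small]) auto
  have d2: "(Tl 2 has_field_derivative deriv (Tl 2) 0) (at 0)"
    by (rule holomorphic_derivI[OF tail_props(1)[OF R]]) auto
  have "(GG has_field_derivative deriv (T 1) 0 + deriv (Tl 2) 0) (at 0)"
    unfolding GG_def[abs_def] by (rule DERIV_add[OF d1 d2])
  hence dG: "deriv GG 0 = bb 1 + deriv (Tl 2) 0"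
    using DERIV_imp_deriv deriv_T0[of 1] by simp
  have "(\<lambda>n. deriv (T (n + 2)) 0) sums deriv (Tl 2) 0"
    by (rule tail_props(3)[OF R]) simp
  moreover have "deriv (T (n + 2)) 0 = bb (Suc n + 1)" for n
    using deriv_T0[of "n + 2"] by simp
  ultimately have "(\<lambda>n. bb (Suc n + 1)) sums deriv (Tl 2) 0" by simp
  hence "(\<lambda>n. bb (n + 1)) sums (deriv (Tl 2) 0 + bb (0 + 1))"
    by (subst (asm) sums_Suc_iff[of "\<lambda>n. bb (n + 1)"])
  thus ?thesis using dG by (simp add: add.commute)
qed

definition SS :: complex where "SS = (\<Sum>k. Ln (1 - E (z + of_nat k)))"

lemma bb_sum: "(\<lambda>n. bb (n + 1)) sums (- SS)"
proof -
  define w where "w = (\<lambda>k::nat. E (z + of_nat k))"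
  define Fn where "Fn = (\<lambda>n k. w k ^ (n + 1) / of_nat (n + 1))"
  have nw: "norm (w k) = q ^ k * xz" for k
  proof -
    have "norm (w k) = exp ((Re z + real k) * L)" unfolding w_def norm_E by simp
    also have "\<dots> = exp (real k * L) * xz" unfolding xz_def by (simp add: distrib_right exp_add)
    also have "exp (real k * L) = q ^ k" by (simp add: exp_of_nat_mult exp_L)
    finally show ?thesis .
  qed
  have nw1: "norm (w k) < 1" for k unfolding w_def by (rule norm_E_lt1) (use hz in simp)
  have s1: "(\<lambda>k. Fn n k) sums bb (n + 1)" for n
  proof -
    have wq: "w k ^ (n + 1) = E (of_nat (n + 1) * z) * of_real (q ^ (n + 1)) ^ k" for k
    proof -
      have "w k ^ (n + 1) = E (of_nat (n + 1) * (z + of_nat k))"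
        unfolding w_def by (rule E_nat_mult[symmetric])
      also have "of_nat (n + 1) * (z + of_nat k) = of_nat (n + 1) * z + of_nat k * of_nat (n + 1)"
        by (simp add: algebra_simps)
      also have "E \<dots> = E (of_nat (n + 1) * z) * E (of_nat k * of_nat (n + 1))"
        by (rule E_add)
      also have "E (of_nat k * of_nat (n + 1)) = E (of_nat (n + 1)) ^ k"
        by (rule E_nat_mult)
      also have "E (of_nat (n + 1)) = of_real (q ^ (n + 1))"
        by (rule E_nat)
      finally show ?thesis .
    qed
    have "q ^ (n + 1) \<le> q ^ 1" by (rule power_decreasing) (use q0 q1 in auto)
    hence qn: "q ^ (n + 1) < 1" using q1 by simp
    have "0 < q ^ (n + 1)" using q0 by (rule zero_less_power)
    hence "norm (of_real (q ^ (n + 1)) :: complex) < 1" using qn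
      by (simp only: norm_of_real abs_of_pos)
    hence "(\<lambda>k. of_real (q ^ (n + 1)) ^ k) sums (1 / (1 - of_real (q ^ (n + 1))) :: complex)"
      by (rule geometric_sums)
    hence "(\<lambda>k. (E (of_nat (n + 1) * z) / of_nat (n + 1)) * of_real (q ^ (n + 1)) ^ k) sums
          ((E (of_nat (n + 1) * z) / of_nat (n + 1)) * (1 / (1 - of_real (q ^ (n + 1)))))"
      by (rule sums_mult)
    thus ?thesis unfolding Fn_def wq bb_def by (simp add: field_simps)
  qed
  have s2: "(\<lambda>n. Fn n k) sums (- Ln (1 - w k))" for k
  proof -
    have "norm (- w k) < 1" using nw1[of k] by simp
    from Ln_series'[OF this] have "(\<lambda>n. - (w k ^ n) / of_nat n) sums Ln (1 - w k)" by simp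
    hence "(\<lambda>n. - (w k ^ Suc n) / of_nat (Suc n)) sums (Ln (1 - w k) - 0)"
      using sums_Suc_iff[of "\<lambda>n. - (w k ^ n) / of_nat n" "Ln (1 - w k) - 0"] by simp
    hence "(\<lambda>n. - (- (w k ^ Suc n) / of_nat (Suc n))) sums (- Ln (1 - w k))"
      using sums_minus by fastforce
    thus ?thesis unfolding Fn_def by simp
  qed
  have bnd: "norm (Fn n k) \<le> xz ^ (n + 1) * q ^ k" for n k
  proof -
    have "norm (Fn n k) = (q ^ k * xz) ^ (n + 1) / real (n + 1)"
      by (simp only: Fn_def norm_divide norm_power nw norm_of_nat)
    also have "\<dots> \<le> (q ^ k * xz) ^ (n + 1)"
    proof -
      have x0: "0 \<le> (q ^ k * xz) ^ (n + 1)" using q0 xz_pos by simp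
      have "(q ^ k * xz) ^ (n + 1) / real (n + 1) = (q ^ k * xz) ^ (n + 1) * (1 / real (n + 1))"
        by simp
      also have "\<dots> \<le> (q ^ k * xz) ^ (n + 1) * 1" by (rule mult_left_mono[OF _ x0]) simp
      finally show ?thesis by simp
    qed
    also have "\<dots> = (q ^ k) ^ (n + 1) * xz ^ (n + 1)" by (simp add: power_mult_distrib)
    also have "(q ^ k) ^ (n + 1) \<le> (q ^ k) ^ 1"
      using q0 q1 by (intro power_decreasing) (simp_all add: power_le_one)
    hence "(q ^ k) ^ (n + 1) \<le> q ^ k" by simp
    hence "(q ^ k) ^ (n + 1) * xz ^ (n + 1) \<le> q ^ k * xz ^ (n + 1)"
      using xz_pos by (intro mult_right_mono) auto
    finally show ?thesis by (simp add: mult.commute)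
  qed
  have sa: "summable (\<lambda>n. xz ^ (n + 1))" using xz_pos xz_lt1
    by (simp add: summable_geometric)
  have sb: "summable (\<lambda>k. q ^ k)" using q0 q1 by (simp add: summable_geometric)
  have sw: "(\<Sum>n. \<Sum>k. Fn n k) = (\<Sum>k. \<Sum>n. Fn n k)"
    and sm: "summable (\<lambda>k. \<Sum>n. Fn n k)"
    using swap_suminf[OF bnd sa sb] xz_pos q0 by auto
  have "(\<Sum>n. bb (n + 1)) = (\<Sum>k. - Ln (1 - w k))"
    using sw s1 s2 by (simp add: sums_iff)
  also have "\<dots> = - SS"
  proof -
    have "summable (\<lambda>k. - Ln (1 - w k))" using sm s2 by (simp add: sums_iff)
    hence "summable (\<lambda>k. Ln (1 - w k))" by (simp add: summable_minus_iff)
    thus ?thesis unfolding SS_def w_def by (simp add: suminf_minus)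
  qed
  finally have eq: "(\<Sum>n. bb (n + 1)) = - SS" .
  have "summable (\<lambda>n. bb (n + 1))" using sm s1 sw swap_suminf(3)[OF bnd sa sb] xz_pos q0
    by (simp add: sums_iff)
  thus ?thesis using eq by (simp add: sums_iff)
qed

lemma deriv_GG_SS: "deriv GG 0 = - SS"
  using deriv_GG bb_sum sums_unique2 by blast

end

lemma poly_id:
  fixes l a s :: complex
  assumes "l \<noteq> 0"
  shows "s * (1 + a* s + a^2/2* s^2) - (1 - (1 + l* s + l^2/2* s^2 + l^3/6* s^3)) *
      ((-1/l) + (1/2 - a/l)* s + (-(1/12)* l + (1/2)* a - (1/2)* a^2/l)* s^2)
    = s^4 * ((l^2/2* (-(1/12)* l + (1/2)* a - (1/2)* a^2/l) + l^3/6* (1/2 - a/l)) +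
        l^3/6* (-(1/12)* l + (1/2)* a - (1/2)* a^2/l)* s)"
  using assms by (simp add: field_simps eval_nat_numeral)
lemma s3: "(\<Sum>n<3. c^n / fact n * (s::complex)^n) = 1 + c * s + c^2/2 * s^2"
  by (simp add: eval_nat_numeral)
lemma s4: "(\<Sum>n<4. c^n / fact n * (s::complex)^n) = 1 + c * s + c^2/2 * s^2 + c^3/6* s^3"
  by (simp add: eval_nat_numeral)

context qz
begin

definition cm1 :: real where "cm1 = - 1 / L"
definition c0 :: real where "c0 = 1/2 - A / L"
definition c1 :: real where "c1 = - (1/12) * L + (1/2) * A - (1/2) * A^2 / L"

lemma P2_bigo: "(\<lambda>s. exp (s * of_real A) * GG s + SS * s) \<in> O[at 0](\<lambda>s. s^2)"
proof -
  have e1: "(\<lambda>s::complex. exp (s * of_real A) - 1) \<in> O[at 0](\<lambda>s. s)"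
    using taylor1_bigo[of "\<lambda>s. exp (s * of_real A)" 1] by (simp add: holomorphic_intros)
  have g1: "(\<lambda>s. GG s) \<in> O[at 0](\<lambda>s. s)"
    using taylor1_bigo[OF GG_holo] GG0 by simp
  have pr: "(\<lambda>s. (exp (s * of_real A) - 1) * GG s) \<in> O[at 0](\<lambda>s. s^2)"
    using landau_o.big.mult[OF e1 g1] by (simp add: power2_eq_square)
  have g2: "(\<lambda>s. GG s + SS * s) \<in> O[at 0](\<lambda>s. s^2)"
    using taylor2_bigo[OF GG_holo] GG0 deriv_GG_SS by simp
  have "(\<lambda>s. (exp (s * of_real A) - 1) * GG s + (GG s + SS * s)) \<in> O[at 0](\<lambda>s. s^2)"
    by (rule sum_in_bigo(1)[OF pr g2])
  thus ?thesis by (simp add: algebra_simps)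
qed

lemma N_bigo:
  defines "Q \<equiv> (\<lambda>s. of_real cm1 + of_real c0 * s + of_real c1 * s^2)"
  shows "(\<lambda>s. s * exp (s * of_real A) - (1 - E s) * Q s) \<in> O[at 0](\<lambda>s. s^4)"
proof -
  define l where "l = complex_of_real L"
  define a where "a = complex_of_real A"
  have l0: "l \<noteq> 0" using L_ne0 by (simp add: l_def)
  have R1: "(\<lambda>s. exp (a * s) - (\<Sum>n<3. a ^ n / fact n * s ^ n)) \<in> O[at 0](\<lambda>s. s ^ 3)"
    by (rule exp_rem_bigo)
  have R2: "(\<lambda>s. exp (l * s) - (\<Sum>n<4. l ^ n / fact n * s ^ n)) \<in> O[at 0](\<lambda>s. s ^ 4)"
    by (rule exp_rem_bigo)
  have t1: "(\<lambda>s. s * (exp (a * s) - (\<Sum>n<3. a ^ n / fact n * s ^ n))) \<in> O[at 0](\<lambda>s. s ^ 4)"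
    using landau_o.big.mult_left[OF R1, of "\<lambda>s. s"] by (simp add: power_Suc[symmetric] del: power_Suc)
  have Qc: "isCont Q 0" unfolding Q_def by (intro continuous_intros)
  have Qb: "(\<lambda>s. 1 * Q s) \<in> O[at 0](\<lambda>_. 1)" by (rule bigo_cont_factor[OF Qc])
  have t2: "(\<lambda>s. (exp (l * s) - (\<Sum>n<4. l ^ n / fact n * s ^ n)) * (1 * Q s)) \<in> O[at 0](\<lambda>s. s ^ 4 * 1)"
    by (rule landau_o.big.mult[OF R2 Qb])
  define c4 where "c4 = l^2/2 * (-(1/12) * l + (1/2) * a - (1/2) * a^2 / l) + l^3/6 * (1/2 - a/l)"
  define c5 where "c5 = l^3/6 * (-(1/12) * l + (1/2) * a - (1/2) * a^2 / l)"
  have pc: "isCont (\<lambda>s. c4 + c5 * s) 0" by (intro continuous_intros)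
  have t3: "(\<lambda>s. s^4 * (c4 + c5 * s)) \<in> O[at 0](\<lambda>s. s ^ 4)" by (rule bigo_cont_factor[OF pc])
  have "(\<lambda>s. s * (exp (a * s) - (\<Sum>n<3. a ^ n / fact n * s ^ n))
      + (exp (l * s) - (\<Sum>n<4. l ^ n / fact n * s ^ n)) * (1 * Q s) + s^4 * (c4 + c5 * s))
      \<in> O[at 0](\<lambda>s. s ^ 4)"
    using t1 t2 t3 by (intro sum_in_bigo) simp_all
  moreover have "s * (exp (a * s) - (\<Sum>n<3. a ^ n / fact n * s ^ n)) +
      (exp (l * s) - (\<Sum>n<4. l ^ n / fact n * s ^ n)) * (1 * Q s) + s^4 * (c4 + c5 * s) =
      s * exp (s * of_real A) - (1 - E s) * Q s" for s
  proof -
    have am: "complex_of_real cm1 = -1/l" unfolding cm1_def l_def by simp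
    have c0': "complex_of_real c0 = 1/2 - a/l" unfolding c0_def l_def a_def by simp
    have c1': "complex_of_real c1 = -(1/12) * l + (1/2) * a - (1/2) * a^2 / l"
      unfolding c1_def l_def a_def by simp
    have s3: "(\<Sum>n<3. a^n / fact n * s^n) = 1 + a * s + a^2/2 * s^2"
      by (simp add: eval_nat_numeral)
    have s4: "(\<Sum>n<4. l^n / fact n * s^n) = 1 + l * s + l^2/2 * s^2 + l^3/6 * s^3"
      by (simp add: eval_nat_numeral)
    have Es: "E s = exp (l * s)" unfolding E_def l_def by (simp add: mult.commute)
    have ea: "exp (s * of_real A) = exp (a * s)" unfolding a_def by (simp add: mult.commute)
    have pid: "s * (1 + a * s + a^2/2 * s^2) - (1 - (1 + l * s + l^2/2 * s^2 + l^3/6 * s^3)) *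
      ((-1/l) + (1/2 - a/l) * s + (-(1/12) * l + (1/2) * a - (1/2) * a^2/l) * s^2)
      = s^4 * (c4 + c5 * s)"
      unfolding c4_def c5_def by (rule poly_id[OF l0])
    have pid': "s^4 * (c4 + c5 * s) = s * (\<Sum>n<3. a^n / fact n * s^n) -
        (1 - (\<Sum>n<4. l^n / fact n * s^n)) * Q s"
      unfolding s3 s4 Q_def am c0' c1' by (rule pid[symmetric])
    show ?thesis
      unfolding pid' Es ea by (simp add: algebra_simps)
  qed
  ultimately show ?thesis by simp
qed


lemma P1_bigo:
  "(\<lambda>s. exp (s * of_real A) * T 0 s - (of_real cm1 / s + of_real c0 + of_real c1 * s)) \<in> O[at 0](\<lambda>s. s^2)"
proof -
  define f where "f = (\<lambda>s::complex. 1 - E s)"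
  have fholo: "f holomorphic_on UNIV" unfolding f_def E_def by (intro holomorphic_intros)
  have f0: "f 0 = 0" by (simp add: f_def)
  have fd: "(f has_field_derivative - of_real L) (at 0)" unfolding f_def E_def
    by (auto intro!: derivative_eq_intros)
  define D where "D = (\<lambda>s. if s = 0 then deriv f 0 else (f s - f 0) / (s - 0))"
  have Dholo: "D holomorphic_on UNIV" unfolding D_def by (rule pole_lemma_open[OF fholo]) simp
  have D0: "D 0 = - of_real L" using DERIV_imp_deriv[OF fd] by (simp add: D_def)
  have D0ne: "D 0 \<noteq> 0" using D0 L_ne0 by simp
  have Dc: "isCont D 0" by (rule holo_isCont[OF Dholo]) auto
  have iDc: "isCont (\<lambda>s. inverse (D s)) 0" unfolding isCont_def by (rule tendsto_inverse[OF Dc[unfolded isCont_def] D0ne])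
  have iDb: "(\<lambda>s. 1 * inverse (D s)) \<in> O[at 0](\<lambda>_. 1)" by (rule bigo_cont_factor[OF iDc])
  have evD: "eventually (\<lambda>s. D s \<noteq> 0) (at 0)"
    using tendsto_imp_eventually_ne[OF Dc[unfolded isCont_def] D0ne] .
  have ev0: "eventually (\<lambda>s::complex. s \<noteq> 0) (at 0)" by (simp add: eventually_at_filter)
  define Q where "Q = (\<lambda>s::complex. of_real cm1 + of_real c0 * s + of_real c1 * s^2)"
  have NB: "(\<lambda>s. s * exp (s * of_real A) - (1 - E s) * Q s) \<in> O[at 0](\<lambda>s. s^4)"
    using N_bigo unfolding Q_def .
  have m1: "(\<lambda>s. (s * exp (s * of_real A) - (1 - E s) * Q s) * (1 * inverse (D s))) \<in> O[at 0](\<lambda>s. s^4 * 1)"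
    by (rule landau_o.big.mult[OF NB iDb])
  have m2: "(\<lambda>s. inverse (s^2) * ((s * exp (s * of_real A) - (1 - E s) * Q s) * (1 * inverse (D s))))
      \<in> O[at 0](\<lambda>s. inverse (s^2) * (s^4 * 1))"
    by (rule landau_o.big.mult_left[OF m1])
  have "eventually (\<lambda>s::complex. inverse (s^2) * (s^4 * 1) = s^2) (at 0)"
    using ev0 by eventually_elim (simp add: field_simps eval_nat_numeral)
  hence "O[at 0](\<lambda>s. inverse (s^2) * (s^4 * 1)) = O[at 0](\<lambda>s::complex. s^2)"
    by (rule landau_o.big.cong)
  with m2 have m3: "(\<lambda>s. inverse (s^2) * ((s * exp (s * of_real A) - (1 - E s) * Q s) * (1 * inverse (D s))))
      \<in> O[at 0](\<lambda>s. s^2)" by simp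
  have "eventually (\<lambda>s. inverse (s^2) * ((s * exp (s * of_real A) - (1 - E s) * Q s) * (1 * inverse (D s)))
      = exp (s * of_real A) * T 0 s - (of_real cm1 / s + of_real c0 + of_real c1 * s)) (at 0)"
    using ev0 evD
  proof eventually_elim
    case (elim s)
    have fs: "1 - E s = s * D s" using elim by (simp add: D_def f_def)
    show ?case unfolding T0 fs Q_def using elim by (simp add: field_simps eval_nat_numeral)
  qed
  from landau_o.big.in_cong[OF this] m3 show ?thesis by simp
qed

lemma laurent0:
  "(\<lambda>s. FF s - (of_real cm1 / s + of_real c0 + s * (of_real c1 - SS))) \<in> O[at 0](\<lambda>s. s^2)"
proof -
  have "(\<lambda>s. (exp (s * of_real A) * T 0 s - (of_real cm1 / s + of_real c0 + of_real c1 * s)) +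
      (exp (s * of_real A) * GG s + SS * s)) \<in> O[at 0](\<lambda>s. s^2)"
    by (rule sum_in_bigo(1)[OF P1_bigo P2_bigo])
  moreover have "(exp (s * of_real A) * T 0 s - (of_real cm1 / s + of_real c0 + of_real c1 * s)) +
      (exp (s * of_real A) * GG s + SS * s) = FF s - (of_real cm1 / s + of_real c0 + s * (of_real c1 - SS))" for s
    unfolding FF_GG by (simp add: algebra_simps)
  ultimately show ?thesis by simp
qed

end

theorem proposition1:
  fixes q :: real and z :: complex
  assumes q0: "0 < q" and q1: "q < 1" and hz: "Re z > 0"
  defines "\<delta> \<equiv> 2 * pi * \<i> / of_real (ln q)"
  defines "P \<equiv> {s. \<exists>r::nat. \<exists>l::int. s = - of_nat r + \<delta> * of_int l}"
  defines "am1 \<equiv> - 1 / ln q"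
  defines "a0 \<equiv> 1/2 - ln (q - q^2) / ln q"
  defines "a1 \<equiv> - (1/12) * ln q + (1/2) * ln (q - q^2) - (1/2) * (ln (q - q^2))^2 / ln q"
  shows "\<exists>F :: complex \<Rightarrow> complex.
           F meromorphic_on UNIV \<and>
           F holomorphic_on (- P) \<and>
           (\<forall>s. Re s > 0 \<longrightarrow> F s = qHurwitz_zeta q z s) \<and>
           (\<forall>p\<in>P. is_pole F p \<and> zorder F p = -1) \<and>
           (\<lambda>s. F s - (of_real am1 / s + of_real a0
                  + s * (of_real a1 - (\<Sum>k. Ln (1 - exp ((z - 1 + of_nat (Suc k)) * of_real (ln q)))))))
             \<in> O[at 0](\<lambda>s. s^2)"
proof -
  interpret qz q z using q0 q1 hz by unfold_locales
  have dl_eq: "\<delta> = dl" using assms(4) unfolding dl_def L_def by (simp add: field_simps)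
  have P_eq: "P = Pset" by (simp add: assms(5) Pset_def dl_eq)
  have am: "am1 = cm1" by (simp add: assms(6) cm1_def L_def)
  have a0e: "a0 = c0" by (simp add: assms(7) c0_def L_def A_def)
  have a1e: "a1 = c1" by (simp add: assms(8) c1_def L_def A_def)
  have SSe: "(\<Sum>k. Ln (1 - exp ((z - 1 + of_nat (Suc k)) * of_real (ln q)))) = SS"
  proof -
    have "z - 1 + of_nat (Suc k) = z + of_nat k" for k by simp
    thus ?thesis unfolding SS_def E_def L_def by simp
  qed
  show ?thesis
  proof (intro exI[of _ FF] conjI allI impI ballI)
    show "FF meromorphic_on UNIV" by (rule FF_mero)
    show "FF holomorphic_on - P" unfolding P_eq by (rule FF_holo)
    show "FF s = qHurwitz_zeta q z s" if "0 < Re s" for s by (rule FF_eq[OF that])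
    show "is_pole FF p" if "p \<in> P" for p
      using that pole_at unfolding P_eq Pset_def by blast
    show "zorder FF p = -1" if "p \<in> P" for p
      using that pole_at unfolding P_eq Pset_def by blast
    show "(\<lambda>s. FF s - (of_real am1 / s + of_real a0
                  + s * (of_real a1 - (\<Sum>k. Ln (1 - exp ((z - 1 + of_nat (Suc k)) * of_real (ln q)))))))
             \<in> O[at 0](\<lambda>s. s^2)"
      unfolding am a0e a1e SSe by (rule laurent0)
  qed
qed

end
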